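(* Let $A$ be a $\Gamma$-ring (as defined below) and define $N\colon A\to A$ by \begin{align*} Nx &= (Q_0x)^3 +2a\, (Q_0x)^2Q_2x -a\, Q_0x(Q_1x)^2 + a^2\,Q_0x(Q_2x)^2 - 6\, Q_0x\, Q_1x \, Q_2 x \\ &\qquad +2\,(Q_1x)^3 -2a\, Q_1x(Q_2x)^2 +4\,(Q_2x)^3. \end{align*} Then $N(xy)=N(x)N(y)$ for all $x,y\in A$.
   Context: $R=\mathbb{Z}[a]$ is a polynomial ring. $\Gamma$ is the associative ring equipped with a ring homomorphism $\eta\colon R\to\Gamma$, generated over $R$ by $Q_0,Q_1,Q_2$ subject to: (i) the $Q_i$ commute with elements of $\mathbb{Z}\subset R$, and $Q_0\,a = a^2Q_0-2aQ_1+6Q_2$, $Q_1\,a=3Q_0+aQ_2$, $Q_2\,a=-aQ_0+3Q_1$; (ii) $Q_1Q_0=2Q_2Q_1-2Q_0Q_2$ and $Q_2Q_0=Q_0Q_1+aQ_0Q_2-2Q_1Q_2$. A $\Gamma$-ring is a commutative $R$-algebra $A$ with a left $\Gamma$-module structure extending its $R$-module structure, such that $Q_0\cdot 1=1$, $Q_1\cdot1=Q_2\cdot 1=0$, and the cartan formulas hold for all $x,y\in A$: $Q_0(xy) = Q_0x\,Q_0y + 2\,Q_1x\,Q_2y+2\,Q_2x\, Q_1y$, $Q_1(xy) = Q_0x\, Q_1y + Q_1x\, Q_0y + a\,Q_1x\, Q_2y +a\, Q_2x\, Q_1y +2\, Q_2x\, Q_2y$, $Q_2(xy) = Q_0x\,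 Q_2y+Q_2x\, Q_0y+Q_1x\, Q_1y + a\, Q_2x\, Q_2y$. (Equivalently, a commutative monoid object in $\Gamma$-modules with the tensor product given by these formulas and unit $R$.) *)

theory Defs
  imports Main
begin

text \<open>A commutative R-algebra A, R = Z[a], is a commutative ring A together with the
image al of the generator a in A.  A left Gamma-module structure extending the R-module
structure is given by additive operators Q0 Q1 Q2 on A (the action of the generators of Gamma)
satisfying the defining relations of Gamma, where the action of a is multiplication by al.\<close>

definition gamma_module :: "'a::comm_ring_1 \<Rightarrow> ('a \<Rightarrow> 'a) \<Rightarrow> ('a \<Rightarrow> 'a) \<Rightarrow> ('a \<Rightarrow> 'a) \<Rightarrow> bool" where
  "gamma_module al Q0 Q1 Q2 \<longleftrightarrow>
     (\<forall>x y. Q0 (x + y) = Q0 x + Q0 y \<and> Q1 (x + y) = Q1 x + Q1 y \<and> Q2 (x + y) = Q2 x + Q2 y) \<and>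
     (\<forall>x. Q0 (al * x) = al^2 * Q0 x - 2 * al * Q1 x + 6 * Q2 x) \<and>
     (\<forall>x. Q1 (al * x) = 3 * Q0 x + al * Q2 x) \<and>
     (\<forall>x. Q2 (al * x) = - al * Q0 x + 3 * Q1 x) \<and>
     (\<forall>x. Q1 (Q0 x) = 2 * Q2 (Q1 x) - 2 * Q0 (Q2 x)) \<and>
     (\<forall>x. Q2 (Q0 x) = Q0 (Q1 x) + al * Q0 (Q2 x) - 2 * Q1 (Q2 x))"

definition gamma_ring :: "'a::comm_ring_1 \<Rightarrow> ('a \<Rightarrow> 'a) \<Rightarrow> ('a \<Rightarrow> 'a) \<Rightarrow> ('a \<Rightarrow> 'a) \<Rightarrow> bool" where
  "gamma_ring al Q0 Q1 Q2 \<longleftrightarrow>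
     gamma_module al Q0 Q1 Q2 \<and>
     Q0 1 = 1 \<and> Q1 1 = 0 \<and> Q2 1 = 0 \<and>
     (\<forall>x y. Q0 (x * y) = Q0 x * Q0 y + 2 * Q1 x * Q2 y + 2 * Q2 x * Q1 y) \<and>
     (\<forall>x y. Q1 (x * y) = Q0 x * Q1 y + Q1 x * Q0 y + al * Q1 x * Q2 y + al * Q2 x * Q1 y
                          + 2 * Q2 x * Q2 y) \<and>
     (\<forall>x y. Q2 (x * y) = Q0 x * Q2 y + Q2 x * Q0 y + Q1 x * Q1 y + al * Q2 x * Q2 y)"

definition normN :: "'a::comm_ring_1 \<Rightarrow> ('a \<Rightarrow> 'a) \<Rightarrow> ('a \<Rightarrow> 'a) \<Rightarrow> ('a \<Rightarrow> 'a) \<Rightarrow> 'a \<Rightarrow> 'a" where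
  "normN al Q0 Q1 Q2 x =
     (Q0 x)^3 + 2 * al * (Q0 x)^2 * Q2 x - al * Q0 x * (Q1 x)^2 + al^2 * Q0 x * (Q2 x)^2
     - 6 * Q0 x * Q1 x * Q2 x + 2 * (Q1 x)^3 - 2 * al * Q1 x * (Q2 x)^2 + 4 * (Q2 x)^3"

end

theory Submission
  imports Defs
begin

lemma key:
  fixes al a0 a1 a2 b0 b1 b2 :: "'a::comm_ring_1"
  shows "(a0*b0 + 2*a1*b2 + 2*a2*b1)^3
   + 2*al*(a0*b0 + 2*a1*b2 + 2*a2*b1)^2*(a0*b2 + a2*b0 + a1*b1 + al*a2*b2)
   - al*(a0*b0 + 2*a1*b2 + 2*a2*b1)*(a0*b1 + a1*b0 + al*a1*b2 + al*a2*b1 + 2*a2*b2)^2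
   + al^2*(a0*b0 + 2*a1*b2 + 2*a2*b1)*(a0*b2 + a2*b0 + a1*b1 + al*a2*b2)^2
   - 6*(a0*b0 + 2*a1*b2 + 2*a2*b1)*(a0*b1 + a1*b0 + al*a1*b2 + al*a2*b1 + 2*a2*b2)*(a0*b2 + a2*b0 + a1*b1 + al*a2*b2)
   + 2*(a0*b1 + a1*b0 + al*a1*b2 + al*a2*b1 + 2*a2*b2)^3
   - 2*al*(a0*b1 + a1*b0 + al*a1*b2 + al*a2*b1 + 2*a2*b2)*(a0*b2 + a2*b0 + a1*b1 + al*a2*b2)^2
   + 4*(a0*b2 + a2*b0 + a1*b1 + al*a2*b2)^3
  = (a0^3 + 2*al*a0^2*a2 - al*a0*a1^2 + al^2*a0*a2^2 - 6*a0*a1*a2 + 2*a1^3 - 2*al*a1*a2^2 + 4*a2^3)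
  * (b0^3 + 2*al*b0^2*b2 - al*b0*b1^2 + al^2*b0*b2^2 - 6*b0*b1*b2 + 2*b1^3 - 2*al*b1*b2^2 + 4*b2^3)"
  by (simp add: algebra_simps power2_eq_square power3_eq_cube)

theorem mainTheorem4:
  fixes al :: "'a::comm_ring_1" and Q0 Q1 Q2 :: "'a \<Rightarrow> 'a"
  assumes "gamma_ring al Q0 Q1 Q2"
  shows "\<forall>x y. normN al Q0 Q1 Q2 (x * y) = normN al Q0 Q1 Q2 x * normN al Q0 Q1 Q2 y"
proof (intro allI)
  fix x y
  from assms have
    h0: "Q0 (x * y) = Q0 x * Q0 y + 2 * Q1 x * Q2 y + 2 * Q2 x * Q1 y" and
    h1: "Q1 (x * y) = Q0 x * Q1 y + Q1 x * Q0 y + al * Q1 x * Q2 y + al * Q2 x * Q1 y + 2 * Q2 x * Q2 y" and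
    h2: "Q2 (x * y) = Q0 x * Q2 y + Q2 x * Q0 y + Q1 x * Q1 y + al * Q2 x * Q2 y"
    unfolding gamma_ring_def by blast+
  show "normN al Q0 Q1 Q2 (x * y) = normN al Q0 Q1 Q2 x * normN al Q0 Q1 Q2 y"
    unfolding normN_def h0 h1 h2 by (rule key)
qed

end
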